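(* Let $\Gamma_1,\Gamma_2$ be finite connected graphs whose normalized Laplacians have a common eigenvalue $\lambda$, with eigenfunctions $f^1$ on $\Gamma_1$ and $f^2$ on $\Gamma_2$. Assume $f^1(p_1)=0$ and $f^2(p_2)=0$ for some vertices $p_1\in\Gamma_1$, $p_2\in\Gamma_2$. Let $\Gamma$ be the graph obtained from the disjoint union of $\Gamma_1$ and $\Gamma_2$ by identifying $p_1$ with $p_2$. Then $\lambda$ is an eigenvalue of the normalized Laplacian of $\Gamma$, with an eigenfunction equal to $f^1$ on $\Gamma_1$ and to $f^2$ on $\Gamma_2$.
   Context: For a finite simple graph without isolated vertices, write $i\sim j$ for adjacency and $n_i$ for the degree of $i$. The normalized Laplacian acts on real functions $v$ on the vertices by $\Delta v(i)=v(i)-\frac{1}{n_i}\sum_{j\sim i}v(j)$; $\lambda$ is an eigenvalue with eigenfunction $u$ if $u\not\equiv 0$ and $\frac{1}{n_i}\sum_{j\sim i}u(j)=(1-\lambda)u(i)$ for all $i$. *)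

theory Defs
  imports Complex_Main
begin

definition simple_graph :: "'a set \<Rightarrow> ('a \<Rightarrow> 'a \<Rightarrow> bool) \<Rightarrow> bool" where
  "simple_graph V E \<longleftrightarrow> finite V
     \<and> (\<forall>x y. E x y \<longrightarrow> x \<in> V \<and> y \<in> V)
     \<and> (\<forall>x y. E x y \<longrightarrow> E y x)
     \<and> (\<forall>x. \<not> E x x)
     \<and> (\<forall>i\<in>V. \<exists>j. E i j)"

definition connected_graph :: "'a set \<Rightarrow> ('a \<Rightarrow> 'a \<Rightarrow> bool) \<Rightarrow> bool" where
  "connected_graph V E \<longleftrightarrow> simple_graph V E \<and> (\<forall>x\<in>V. \<forall>y\<in>V. E\<^sup>*\<^sup>* x y)"

definition nbrs :: "'a set \<Rightarrow> ('a \<Rightarrow> 'a \<Rightarrow> bool) \<Rightarrow> 'a \<Rightarrow> 'a set" where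
  "nbrs V E i = {j \<in> V. E i j}"

definition degree :: "'a set \<Rightarrow> ('a \<Rightarrow> 'a \<Rightarrow> bool) \<Rightarrow> 'a \<Rightarrow> nat" where
  "degree V E i = card (nbrs V E i)"

definition nl_eigen :: "'a set \<Rightarrow> ('a \<Rightarrow> 'a \<Rightarrow> bool) \<Rightarrow> real \<Rightarrow> ('a \<Rightarrow> real) \<Rightarrow> bool" where
  "nl_eigen V E lam u \<longleftrightarrow> (\<exists>i\<in>V. u i \<noteq> 0)
     \<and> (\<forall>i\<in>V. (1 / real (degree V E i)) * (\<Sum>j\<in>nbrs V E i. u j) = (1 - lam) * u i)"

text \<open>Gluing: disjoint union on 'a + 'b, with Inr p2 identified with Inl p1.\<close>
definition glue_map :: "'a \<Rightarrow> 'b \<Rightarrow> 'a + 'b \<Rightarrow> 'a + 'b" where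
  "glue_map p1 p2 v = (if v = Inr p2 then Inl p1 else v)"

definition union_E :: "('a \<Rightarrow> 'a \<Rightarrow> bool) \<Rightarrow> ('b \<Rightarrow> 'b \<Rightarrow> bool) \<Rightarrow> 'a + 'b \<Rightarrow> 'a + 'b \<Rightarrow> bool" where
  "union_E E1 E2 x y = (case (x, y) of
       (Inl a, Inl b) \<Rightarrow> E1 a b
     | (Inr a, Inr b) \<Rightarrow> E2 a b
     | _ \<Rightarrow> False)"

definition glue_V :: "'a set \<Rightarrow> 'b set \<Rightarrow> 'a \<Rightarrow> 'b \<Rightarrow> ('a + 'b) set" where
  "glue_V V1 V2 p1 p2 = glue_map p1 p2 ` (Inl ` V1 \<union> Inr ` V2)"

definition glue_E :: "('a \<Rightarrow> 'a \<Rightarrow> bool) \<Rightarrow> ('b \<Rightarrow> 'b \<Rightarrow> bool) \<Rightarrow> 'a \<Rightarrow> 'b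
                      \<Rightarrow> 'a + 'b \<Rightarrow> 'a + 'b \<Rightarrow> bool" where
  "glue_E E1 E2 p1 p2 x y \<longleftrightarrow>
     (\<exists>a b. union_E E1 E2 a b \<and> glue_map p1 p2 a = x \<and> glue_map p1 p2 b = y)"

end

theory Submission imports Defs begin

lemma gm_l[simp]: "glue_map p1 p2 (Inl a) = Inl a" by (simp add: glue_map_def)
lemma gm_r: "glue_map p1 p2 (Inr a) = (if a = p2 then Inl p1 else Inr a)" by (simp add: glue_map_def)

lemma glue_E_iff: "glue_E E1 E2 p1 p2 v w \<longleftrightarrow>
   (\<exists>a b. E1 a b \<and> Inl a = v \<and> Inl b = w) \<or>
   (\<exists>a b. E2 a b \<and> glue_map p1 p2 (Inr a) = v \<and> glue_map p1 p2 (Inr b) = w)"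
  unfolding glue_E_def union_E_def
  apply (rule iffI)
   apply (elim exE conjE)
  subgoal for a b by (cases a; cases b) auto
  apply (elim disjE exE conjE)
  subgoal for a b by (rule exI[of _ "Inl a"], rule exI[of _ "Inl b"]) auto
  subgoal for a b by (rule exI[of _ "Inr a"], rule exI[of _ "Inr b"]) auto
  done

lemma glue_V_iff: "v \<in> glue_V V1 V2 p1 p2 \<longleftrightarrow> (\<exists>a\<in>V1. v = Inl a) \<or> (\<exists>b\<in>V2. v = glue_map p1 p2 (Inr b))"
  unfolding glue_V_def by (auto intro: image_eqI[of _ _ "Inl _"])


lemma nb_l:
  assumes "simple_graph V1 E1" "x \<noteq> p1"
  shows "nbrs (glue_V V1 V2 p1 p2) (glue_E E1 E2 p1 p2) (Inl x) = Inl ` nbrs V1 E1 x"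
proof -
  have sup: "\<And>a b. E1 a b \<Longrightarrow> b \<in> V1" using assms(1) unfolding simple_graph_def by blast
  show ?thesis
  unfolding nbrs_def glue_E_iff glue_V_iff
  using assms(2) sup by (auto simp: gm_r split: if_splits)
qed

lemma nb_r:
  assumes "simple_graph V2 E2" "y \<noteq> p2"
  shows "nbrs (glue_V V1 V2 p1 p2) (glue_E E1 E2 p1 p2) (Inr y) = (\<lambda>b. glue_map p1 p2 (Inr b)) ` nbrs V2 E2 y"
proof -
  have sup: "\<And>a b. E2 a b \<Longrightarrow> b \<in> V2" using assms(1) unfolding simple_graph_def by blast
  show ?thesis
  unfolding nbrs_def glue_E_iff glue_V_iff
  using assms(2) sup by (auto simp: gm_r image_iff split: if_splits)
qed

lemma nb_p:
  assumes "simple_graph V1 E1" "simple_graph V2 E2"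
  shows "nbrs (glue_V V1 V2 p1 p2) (glue_E E1 E2 p1 p2) (Inl p1) = Inl ` nbrs V1 E1 p1 \<union> (\<lambda>b. glue_map p1 p2 (Inr b)) ` nbrs V2 E2 p2"
proof -
  have sup: "\<And>a b. E1 a b \<Longrightarrow> b \<in> V1" using assms(1) unfolding simple_graph_def by blast
  have sup2: "\<And>a b. E2 a b \<Longrightarrow> b \<in> V2" using assms(2) unfolding simple_graph_def by blast
  have irr: "\<not> E1 p1 p1" and irr2: "\<not> E2 p2 p2" using assms unfolding simple_graph_def by blast+
  show ?thesis
  unfolding nbrs_def glue_E_iff glue_V_iff
  using sup sup2 irr irr2 by (auto simp: gm_r image_iff split: if_splits)
qed

lemma sum_zero_at:
  assumes "simple_graph V E" "nl_eigen V E lam f" "p \<in> V" "f p = 0"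
  shows "(\<Sum>j\<in>nbrs V E p. f j) = 0" "degree V E p > 0"
proof -
  have fin: "finite (nbrs V E p)" using assms(1) unfolding simple_graph_def nbrs_def by auto
  obtain j where "E p j" using assms(1,3) unfolding simple_graph_def by blast
  hence "j \<in> nbrs V E p" using assms(1) unfolding simple_graph_def nbrs_def by auto
  thus dp: "degree V E p > 0" unfolding degree_def using fin card_gt_0_iff by blast
  have "(1 / real (degree V E p)) * (\<Sum>j\<in>nbrs V E p. f j) = 0"
    using assms(2,3,4) unfolding nl_eigen_def by auto
  thus "(\<Sum>j\<in>nbrs V E p. f j) = 0" using dp by simp
qed

theorem theorem6:
  fixes V1 :: "'a set" and E1 :: "'a \<Rightarrow> 'a \<Rightarrow> bool"
    and V2 :: "'b set" and E2 :: "'b \<Rightarrow> 'b \<Rightarrow> bool"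
    and lam :: real and f1 :: "'a \<Rightarrow> real" and f2 :: "'b \<Rightarrow> real"
    and p1 :: 'a and p2 :: 'b
  assumes "connected_graph V1 E1" and "connected_graph V2 E2"
    and "nl_eigen V1 E1 lam f1" and "nl_eigen V2 E2 lam f2"
    and "p1 \<in> V1" and "p2 \<in> V2"
    and "f1 p1 = 0" and "f2 p2 = 0"
  shows "\<exists>u. nl_eigen (glue_V V1 V2 p1 p2) (glue_E E1 E2 p1 p2) lam u
           \<and> (\<forall>x\<in>V1. u (glue_map p1 p2 (Inl x)) = f1 x)
           \<and> (\<forall>y\<in>V2. u (glue_map p1 p2 (Inr y)) = f2 y)"
proof -
  have g1: "simple_graph V1 E1" and g2: "simple_graph V2 E2"
    using assms(1,2) unfolding connected_graph_def by auto
  define u :: "'a + 'b \<Rightarrow> real" where "u = case_sum f1 f2"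
  let ?G = "glue_V V1 V2 p1 p2" and ?E = "glue_E E1 E2 p1 p2"
  let ?h = "\<lambda>b. glue_map p1 p2 (Inr b)"
  have uh: "u (?h b) = f2 b" for b using assms(7,8) by (simp add: u_def gm_r)
  have hinj: "inj_on ?h A" for A by (auto simp: inj_on_def gm_r split: if_splits)
  have fin1: "finite (nbrs V1 E1 x)" for x using g1 unfolding simple_graph_def nbrs_def by auto
  have fin2: "finite (nbrs V2 E2 x)" for x using g2 unfolding simple_graph_def nbrs_def by auto
  have e1: "(1 / real (degree V1 E1 i)) * (\<Sum>j\<in>nbrs V1 E1 i. f1 j) = (1 - lam) * f1 i" if "i \<in> V1" for i
    using assms(3) that unfolding nl_eigen_def by auto
  have e2: "(1 / real (degree V2 E2 i)) * (\<Sum>j\<in>nbrs V2 E2 i. f2 j) = (1 - lam) * f2 i" if "i \<in> V2" for i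
    using assms(4) that unfolding nl_eigen_def by auto
  have z1: "(\<Sum>j\<in>nbrs V1 E1 p1. f1 j) = 0" using sum_zero_at[OF g1 assms(3,5,7)] by simp
  have z2: "(\<Sum>j\<in>nbrs V2 E2 p2. f2 j) = 0" using sum_zero_at[OF g2 assms(4,6,8)] by simp
  have irr2: "\<not> E2 p2 p2" using g2 unfolding simple_graph_def by blast
  have eq: "(1 / real (degree ?G ?E i)) * (\<Sum>j\<in>nbrs ?G ?E i. u j) = (1 - lam) * u i" if "i \<in> ?G" for i
  proof -
    have "(\<exists>a\<in>V1. i = Inl a \<and> a \<noteq> p1) \<or> i = Inl p1 \<or> (\<exists>b\<in>V2. i = Inr b \<and> b \<noteq> p2)"
    proof -
      from that consider (l) a where "a \<in> V1" "i = Inl a" | (r) b where "b \<in> V2" "i = ?h b"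
        unfolding glue_V_iff by blast
      then show ?thesis
      proof cases
        case l then show ?thesis by blast
      next
        case r then show ?thesis by (cases "b = p2") (auto simp: gm_r)
      qed
    qed
    then show ?thesis
    proof (elim disjE bexE conjE)
      fix a assume a: "a \<in> V1" "i = Inl a" "a \<noteq> p1"
      have n: "nbrs ?G ?E i = Inl ` nbrs V1 E1 a" using nb_l[OF g1 a(3)] a(2) by simp
      have s: "(\<Sum>j\<in>nbrs ?G ?E i. u j) = (\<Sum>j\<in>nbrs V1 E1 a. f1 j)"
        unfolding n by (subst sum.reindex) (auto simp: u_def)
      have d: "degree ?G ?E i = degree V1 E1 a" unfolding degree_def n by (simp add: card_image)
      show ?thesis using e1[OF a(1)] s d a(2) by (simp add: u_def)
    next
      fix b assume b: "b \<in> V2" "i = Inr b" "b \<noteq> p2"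
      have n: "nbrs ?G ?E i = ?h ` nbrs V2 E2 b" using nb_r[OF g2 b(3)] b(2) by simp
      have s: "(\<Sum>j\<in>nbrs ?G ?E i. u j) = (\<Sum>j\<in>nbrs V2 E2 b. f2 j)"
        unfolding n by (subst sum.reindex[OF hinj]) (simp add: uh)
      have d: "degree ?G ?E i = degree V2 E2 b" unfolding degree_def n by (simp add: card_image[OF hinj])
      show ?thesis using e2[OF b(1)] s d b(2) by (simp add: u_def)
    next
      assume i: "i = Inl p1"
      have n: "nbrs ?G ?E i = Inl ` nbrs V1 E1 p1 \<union> ?h ` nbrs V2 E2 p2" using nb_p[OF g1 g2] i by simp
      have disj: "Inl ` nbrs V1 E1 p1 \<inter> ?h ` nbrs V2 E2 p2 = {}"
        using irr2 by (auto simp: nbrs_def gm_r split: if_splits)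
      have s: "(\<Sum>j\<in>nbrs ?G ?E i. u j) = (\<Sum>j\<in>nbrs V1 E1 p1. f1 j) + (\<Sum>j\<in>nbrs V2 E2 p2. f2 j)"
        unfolding n
        apply (subst sum.union_disjoint)
        using fin1 fin2 disj apply auto[3]
        apply (subst sum.reindex, simp)
        apply (subst sum.reindex[OF hinj])
        apply (simp only: comp_def uh)
        apply (simp add: u_def)
        done
      show ?thesis using s z1 z2 i assms(7) by (simp add: u_def)
    qed
  qed
  obtain i where i: "i \<in> V1" "f1 i \<noteq> 0" using assms(3) unfolding nl_eigen_def by blast
  have "Inl i \<in> ?G" using i(1) unfolding glue_V_iff by blast
  hence nz: "\<exists>i\<in>?G. u i \<noteq> 0" using i(2) by (intro bexI[of _ "Inl i"]) (auto simp: u_def)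
  show ?thesis
    apply (rule exI[of _ u])
    unfolding nl_eigen_def using nz eq uh by (simp add: u_def)
qed
end
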